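(* Let $a$ and $b$ be coprime odd integers and let $\gamma$ be a positive integer such that $2^\gamma\,\|\,(a+b)$. Then: 1) For $\gamma\geq 2$, $OG_{(a,b)}(1)=\bigcup_{i=0}^{\gamma-1}\{d2^i : d\in OG_{(a,b)}(\gamma)\}$, where $OG_{(a,b)}(\gamma)=\{d\in\mathbb{N} : d=1 \text{ or } d \text{ is odd and } 2\,\|\,\operatorname{ord}_p(\tfrac ab) \text{ for every prime } p \text{ dividing } d\}$. 2) $EG_{(a,b)}(1)=\{d\in\mathbb{N} : d=1 \text{ or } d \text{ is odd and there exists } s\geq 2 \text{ such that } 2^s\,\|\,\operatorname{ord}_p(\tfrac ab) \text{ for every prime } p \text{ dividing } d\}$. 3) $OG_{(a,b)}(0)=OG_{(a,b)}(1)\cup\{2d : d\in OG_{(a,b)}(1)\}$. 4) $EG_{(a,b)}(0)=EG_{(a,b)}(1)\cup\{2d : d\in EG_{(a,b)}(1)\}$.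
   Context: For coprime nonzero integers $a,b$ and an integer $\beta\geq0$, $OG_{(a,b)}(\beta)$ (resp. $EG_{(a,b)}(\beta)$) is the set of positive integers $d$ such that $2^\beta d\mid(a^k+b^k)$ for some odd integer $k\geq1$ (resp. some even integer $k\geq 2$). For $n$ coprime to $ab$, $\operatorname{ord}_n(\frac ab)$ is the multiplicative order of $ab^{-1}$ modulo $n$ (conditions on it presuppose it is defined). $2^s\,\|\,m$ means $2^s\mid m$ and $2^{s+1}\nmid m$. *)

theory Defs
  imports "HOL-Number_Theory.Number_Theory"
begin

definition OG :: "int \<Rightarrow> int \<Rightarrow> nat \<Rightarrow> nat set" where
  "OG a b \<beta> = {d. d > 0 \<and> (\<exists>k::nat. odd k \<and> k \<ge> 1 \<and> int (2 ^ \<beta> * d) dvd (a ^ k + b ^ k))}"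

definition EG :: "int \<Rightarrow> int \<Rightarrow> nat \<Rightarrow> nat set" where
  "EG a b \<beta> = {d. d > 0 \<and> (\<exists>k::nat. even k \<and> k \<ge> 2 \<and> int (2 ^ \<beta> * d) dvd (a ^ k + b ^ k))}"

text \<open>Multiplicative order of a b^{-1} modulo n (meaningful when n is coprime to a b):
  the least positive k with (a b^{-1})^k = 1 mod n, i.e. a^k = b^k mod n.\<close>
definition ord_frac :: "nat \<Rightarrow> int \<Rightarrow> int \<Rightarrow> nat" where
  "ord_frac n a b = (LEAST k. k > 0 \<and> [a ^ k = b ^ k] (mod int n))"

definition exact_pow2_dvd :: "nat \<Rightarrow> 'a::comm_semiring_1 \<Rightarrow> bool" where
  "exact_pow2_dvd s m \<longleftrightarrow> 2 ^ s dvd m \<and> \<not> 2 ^ (s + 1) dvd m"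

end

theory Submission
  imports Defs
begin


lemma euler_int:
  fixes p :: nat and a :: int
  assumes "prime p" "coprime a (int p)"
  shows "[a ^ totient p = 1] (mod int p)"
proof -
  have "residues (int p)" using assms(1) prime_gt_1_nat by (simp add: residues_def)
  from residues.euler_theorem[OF this assms(2)] show ?thesis by simp
qed

lemma ord_facts:
  fixes p :: nat and a b :: int
  assumes p: "prime p" and ca: "coprime (int p) a" and cb: "coprime (int p) b"
  defines "m \<equiv> ord_frac p a b"
  shows "m > 0" "[a ^ m = b ^ m] (mod int p)" "\<And>n. [a ^ n = b ^ n] (mod int p) \<Longrightarrow> m dvd n"
proof -
  have ex: "\<exists>k. k > 0 \<and> [a ^ k = b ^ k] (mod int p)"
  proof (intro exI conjI)
    show "totient p > 0" using p prime_gt_0_nat by simp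
    have "[a ^ totient p = 1] (mod int p)" using euler_int[OF p] ca by (simp add: ac_simps)
    moreover have "[b ^ totient p = 1] (mod int p)" using euler_int[OF p] cb by (simp add: ac_simps)
    ultimately show "[a ^ totient p = b ^ totient p] (mod int p)" by (meson cong_sym cong_trans)
  qed
  have L: "m > 0 \<and> [a ^ m = b ^ m] (mod int p)"
    unfolding m_def ord_frac_def by (rule LeastI_ex[OF ex])
  then show "m > 0" "[a ^ m = b ^ m] (mod int p)" by auto
  fix n assume hn: "[a ^ n = b ^ n] (mod int p)"
  define q r where "q = n div m" and "r = n mod m"
  have n: "n = m * q + r" by (simp add: q_def r_def)
  have "[a ^ n = (b ^ m) ^ q * a ^ r] (mod int p)"
    unfolding n power_add power_mult using L by (intro cong_mult[OF cong_pow cong_refl]) auto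
  moreover have "b ^ n = (b ^ m) ^ q * b ^ r" unfolding n power_add power_mult ..
  ultimately have "[(b ^ m) ^ q * a ^ r = (b ^ m) ^ q * b ^ r] (mod int p)"
    using hn by (metis cong_sym cong_trans)
  moreover have "coprime ((b ^ m) ^ q) (int p)" using cb by (simp add: ac_simps)
  ultimately have hr: "[a ^ r = b ^ r] (mod int p)" using cong_mult_lcancel by blast
  have "r < m" using L by (simp add: r_def)
  have "r = 0"
  proof (rule ccontr)
    assume "r \<noteq> 0"
    then have "m \<le> r" unfolding m_def ord_frac_def using hr by (intro Least_le) auto
    with \<open>r < m\<close> show False by simp
  qed
  then show "m dvd n" by (simp add: r_def mod_eq_0_iff_dvd)
qed

lemma pow2_odd_decomp: "(n::nat) > 0 \<Longrightarrow> \<exists>i u. n = 2^i*u \<and> odd u"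
proof (induction n rule: less_induct)
  case (less n)
  show ?case
  proof (cases "odd n")
    case True then show ?thesis by (intro exI[of _ 0] exI[of _ n]) auto
  next
    case False
    then obtain m where m: "n = 2*m" by blast
    with less.prems have "m < n" "m > 0" by auto
    from less.IH[OF this] obtain i u where "m = 2^i*u" "odd u" by blast
    then show ?thesis using m by (intro exI[of _ "Suc i"] exI[of _ u]) auto
  qed
qed

lemma sum_factor:
  fixes u v :: int
  assumes "odd n"
  shows "u^n + v^n = (u+v) * (\<Sum>i<n. (-v)^(n - Suc i) * u^i)"
proof -
  have "u^n - (-v)^n = (u - -v) * (\<Sum>i<n. (-v)^(n - Suc i) * u^i)"
    by (rule power_diff_sumr2)
  moreover have "(-v)^n = -(v^n)" using assms by (simp add: power_minus_odd)
  ultimately show ?thesis by simp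
qed

lemma odd_pow_dvd:
  fixes u v :: int
  assumes "odd n" shows "(u+v) dvd u^n + v^n"
  using sum_factor[OF assms, of u v] by simp

lemma lift:
  fixes u v :: int
  assumes "odd n" "int n dvd u+v"
  shows "(u+v) * int n dvd u^n + v^n"
proof -
  have "-v - u = -(u+v)" by simp
  then have c: "[-v = u] (mod int n)" using assms(2)
    unfolding cong_iff_dvd_diff by (metis dvd_minus_iff)
  have "[(\<Sum>i<n. (-v)^(n - Suc i) * u^i) = (\<Sum>i<n. u^(n - 1))] (mod int n)"
  proof (rule cong_sum)
    fix i assume "i \<in> {..<n}"
    then have "n - Suc i + i = n - 1" by auto
    have "[(-v)^(n - Suc i) * u^i = u^(n - Suc i) * u^i] (mod int n)"
      by (intro cong_mult[OF cong_pow[OF c] cong_refl])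
    also have "u^(n - Suc i) * u^i = u^(n-1)"
      using \<open>n - Suc i + i = n - 1\<close> by (metis power_add)
    finally show "[(-v)^(n - Suc i) * u^i = u^(n-1)] (mod int n)" .
  qed
  moreover have "(\<Sum>i<n. u^(n - 1)) = int n * u^(n-1)" by simp
  ultimately have "int n dvd (\<Sum>i<n. (-v)^(n - Suc i) * u^i)"
    by (metis cong_dvd_iff dvd_triv_left)
  then show ?thesis using sum_factor[OF assms(1), of u v] by (simp add: mult_dvd_mono)
qed

lemma Q_odd:
  fixes u v :: int
  assumes "odd u" "odd v" "odd n"
  shows "odd (\<Sum>i<n. (-v)^(n - Suc i) * u^i)"
proof -
  have "[(\<Sum>i<n. (-v)^(n - Suc i) * u^i) = (\<Sum>i<n. 1)] (mod 2)"
  proof (rule cong_sum)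
    fix i
    have oo: "odd ((-v)^(n - Suc i) * u^i)" using assms by simp
    then show "[(-v)^(n - Suc i) * u^i = 1] (mod 2)"
      unfolding cong_def using odd_iff_mod_2_eq_one[THEN iffD1, OF oo] by simp
  qed
  then have "[(\<Sum>i<n. (-v)^(n - Suc i) * u^i) = int n] (mod 2)" by simp
  then show ?thesis using assms(3)
    by (metis cong_def even_iff_mod_2_eq_zero even_of_nat)
qed

lemma sq_fact: "(x::int)^(2*h) - y^(2*h) = (x^h - y^h) * (x^h + y^h)"
proof -
  have e: "\<And>z::int. z^(2*h) = z^h * z^h" by (metis mult.commute power2_eq_square power_mult)
  show ?thesis unfolding e by (simp add: algebra_simps)
qed

lemma per_prime:
  fixes p :: nat and a b :: int
  assumes p: "prime p" and cab: "coprime (int p) (a*b)"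
    and ex: "exact_pow2_dvd (t+1) (ord_frac p a b)"
  shows "\<exists>w. odd w \<and> int p dvd a^(2^t*w) + b^(2^t*w)"
proof -
  have ca: "coprime (int p) a" and cb: "coprime (int p) b" using cab by auto
  define m where "m = ord_frac p a b"
  note O = ord_facts[OF p ca cb, folded m_def]
  from ex have e1: "2^(t+1) dvd m" and e2: "\<not> 2^(t+2) dvd m"
    unfolding exact_pow2_dvd_def m_def by auto
  from e1 obtain c where mc: "m = 2^(t+1)*c" by blast
  have oc: "odd c"
  proof
    assume "even c"
    then obtain c' where "c = 2*c'" by blast
    then have "m = 2^(t+2)*c'" using mc by simp
    with e2 show False by simp
  qed
  define h where "h = 2^t*c"
  have mh: "m = 2*h" using mc by (simp add: h_def)
  have hpos: "h > 0" using O(1) mh by simp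
  have pi: "prime (int p)" using p by simp
  have "int p dvd a^m - b^m" using O(2) by (simp add: cong_iff_dvd_diff)
  then have "int p dvd (a^h - b^h) * (a^h + b^h)" unfolding mh sq_fact .
  then have "int p dvd a^h - b^h \<or> int p dvd a^h + b^h"
    using pi prime_dvd_mult_iff by blast
  moreover have "\<not> int p dvd a^h - b^h"
  proof
    assume "int p dvd a^h - b^h"
    then have "[a^h = b^h] (mod int p)" by (simp add: cong_iff_dvd_diff)
    then have "m dvd h" by (rule O(3))
    then have "m \<le> h" using hpos by (simp add: dvd_imp_le)
    with mh hpos show False by simp
  qed
  ultimately show ?thesis using oc unfolding h_def by blast
qed

lemma fwd:
  fixes p :: nat and a b :: int
  assumes p: "prime p" "odd p" and cop: "coprime a b" and dv: "int p dvd a^k + b^k"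
    and k: "k = 2^t*u" "odd u"
  shows "coprime (int p) (a*b) \<and> exact_pow2_dvd (t+1) (ord_frac p a b)"
proof -
  have pi: "prime (int p)" using p by simp
  have kpos: "k > 0" using k odd_pos by simp
  have na: "\<not> int p dvd a"
  proof
    assume h: "int p dvd a"
    then have "int p dvd a^k" using dvd_trans[OF h dvd_power[of k a]] kpos by blast
    then have "int p dvd b^k" using dv by (simp add: dvd_add_right_iff)
    then have "int p dvd b" using pi prime_dvd_power by blast
    then have "is_unit (int p)" using h cop by (meson coprime_common_divisor)
    with pi show False by (simp add: not_prime_unit)
  qed
  have nb: "\<not> int p dvd b"
  proof
    assume h: "int p dvd b"
    then have "int p dvd b^k" using dvd_trans[OF h dvd_power[of k b]] kpos by blast
    then have "int p dvd a^k" using dv by (simp add: dvd_add_left_iff)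
    then have "int p dvd a" using pi prime_dvd_power by blast
    then have "is_unit (int p)" using h cop by (meson coprime_common_divisor)
    with pi show False by (simp add: not_prime_unit)
  qed
  have ca: "coprime (int p) a" using pi na by (simp add: prime_imp_coprime)
  have cb: "coprime (int p) b" using pi nb by (simp add: prime_imp_coprime)
  define m where "m = ord_frac p a b"
  note O = ord_facts[OF p(1) ca cb, folded m_def]
  have "int p dvd (a^k - b^k) * (a^k + b^k)" using dv by simp
  then have "int p dvd a^(2*k) - b^(2*k)" unfolding sq_fact .
  then have "m dvd 2*k" using O(3) by (simp add: cong_iff_dvd_diff)
  then have m1: "m dvd 2^(t+1)*u" using k by (simp add: mult.assoc)
  have m2: "\<not> m dvd 2^t*u"
  proof
    assume "m dvd 2^t*u"
    then obtain q where kq: "k = m*q" using k by auto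
    have "[a^k = b^k] (mod int p)" unfolding kq power_mult using O(2) by (rule cong_pow)
    then have "int p dvd a^k - b^k" by (simp add: cong_iff_dvd_diff)
    with dv have "int p dvd (a^k + b^k) - (a^k - b^k)" by (rule dvd_diff)
    then have "int p dvd 2 * b^k" by simp
    then have "int p dvd 2 \<or> int p dvd b^k" using pi prime_dvd_mult_iff by blast
    moreover have "\<not> int p dvd 2"
    proof
      assume "int p dvd 2"
      then have "p dvd 2" by presburger
      then have "p \<le> 2" by (simp add: dvd_imp_le)
      moreover have "p \<ge> 2" using p prime_ge_2_nat by blast
      ultimately show False using p(2) by simp
    qed
    moreover have "\<not> int p dvd b^k" using nb pi prime_dvd_power by blast
    ultimately show False by blast
  qed
  obtain j m' where mj: "m = 2^j*m'" and om: "odd m'" using pow2_odd_decomp O(1) by blast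
  have "coprime m' (2^(t+1))" using om by simp
  then have "m' dvd u" using m1 mj
    by (metis coprime_dvd_mult_right_iff dvd_mult_right mult.commute)
  have "t+1 \<le> j"
  proof (rule ccontr)
    assume "\<not> t+1 \<le> j"
    then have "2^j dvd (2::nat)^t" by (simp add: le_imp_power_dvd)
    then have "m dvd 2^t*u" unfolding mj using \<open>m' dvd u\<close> by (rule mult_dvd_mono)
    with m2 show False by simp
  qed
  then have "(2::nat)^(t+1) dvd 2^j" by (rule le_imp_power_dvd)
  then have d1: "2^(t+1) dvd m" unfolding mj by (rule dvd_mult2)
  have d2: "\<not> 2^(t+1+1) dvd m"
  proof
    assume "2^(t+1+1) dvd m"
    then have "2^(t+1)*2 dvd 2^(t+1)*u" using m1 dvd_trans by fastforce
    then have "2 dvd u" by (simp add: nat_mult_dvd_cancel_disj)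
    with k(2) show False by simp
  qed
  have "coprime (int p) (a*b)" using ca cb by simp
  with d1 d2 show ?thesis unfolding exact_pow2_dvd_def m_def by simp
qed

lemma rev:
  fixes a b :: int and d t :: nat
  assumes "odd d"
    and "\<forall>p. prime p \<and> p dvd d \<longrightarrow> coprime (int p) (a*b) \<and> exact_pow2_dvd (t+1) (ord_frac p a b)"
  shows "\<exists>u. odd u \<and> int d dvd a^(2^t*u) + b^(2^t*u)"
  using assms
proof (induction d rule: less_induct)
  case (less d)
  show ?case
  proof (cases "d = 1")
    case True then show ?thesis by (intro exI[of _ 1]) simp
  next
    case False
    then obtain p where p: "prime p" "p dvd d" using prime_factor_nat by blast
    then obtain d' where dd: "d = p*d'" by blast
    have "d > 0" using less.prems by (intro odd_pos)
    have "p > 1" using p prime_gt_1_nat by blast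
    then have "d' < d" using dd \<open>d>0\<close> by simp
    have od': "odd d'" "odd p" using less.prems dd by auto
    have "\<forall>q. prime q \<and> q dvd d' \<longrightarrow> coprime (int q) (a*b) \<and> exact_pow2_dvd (t+1) (ord_frac q a b)"
      using less.prems(2) dd by auto
    from less.IH[OF \<open>d'<d\<close> od'(1) this] obtain u' where u': "odd u'" "int d' dvd a^(2^t*u') + b^(2^t*u')"
      by blast
    from per_prime[OF p(1)] less.prems(2) p obtain w where w: "odd w" "int p dvd a^(2^t*w) + b^(2^t*w)"
      by blast
    define K0 where "K0 = 2^t*(u'*w)"
    have ea: "\<And>z::int. z^K0 = (z^(2^t*u'))^w" unfolding K0_def
      by (simp only: mult.assoc[symmetric] power_mult)
    have eb: "\<And>z::int. z^K0 = (z^(2^t*w))^u'"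
    proof -
      fix z :: int
      have "K0 = 2^t*w*u'" unfolding K0_def by simp
      then show "z^K0 = (z^(2^t*w))^u'" by (simp only: power_mult)
    qed
    have ec: "\<And>z::int. z^(2^t*(u'*w*p)) = (z^K0)^p" unfolding K0_def
      by (simp only: mult.assoc[symmetric] power_mult)
    have "a^(2^t*u') + b^(2^t*u') dvd (a^(2^t*u'))^w + (b^(2^t*u'))^w"
      using w(1) by (rule odd_pow_dvd)
    then have h1: "int d' dvd a^K0 + b^K0" using u'(2) unfolding ea
      using dvd_trans by blast
    have "a^(2^t*w) + b^(2^t*w) dvd (a^(2^t*w))^u' + (b^(2^t*w))^u'"
      using u'(1) by (rule odd_pow_dvd)
    then have h2: "int p dvd a^K0 + b^K0" using w(2) unfolding eb
      using dvd_trans by blast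
    have l: "(a^K0 + b^K0) * int p dvd (a^K0)^p + (b^K0)^p"
      using od'(2) h2 by (rule lift)
    have "int d' * int p dvd (a^K0 + b^K0) * int p" using h1
      by (rule mult_dvd_mono) simp
    then have "int d dvd (a^K0 + b^K0) * int p" using dd by (simp add: mult.commute)
    then have "int d dvd a^(2^t*(u'*w*p)) + b^(2^t*(u'*w*p))"
      unfolding ec using l dvd_trans by blast
    moreover have "odd (u'*w*p)" using u'(1) w(1) od'(2) by simp
    ultimately show ?thesis by blast
  qed
qed

lemma vdiv:
  fixes a b :: int
  assumes "odd a" "odd b" "exact_pow2_dvd \<gamma> (a + b)" "odd k"
  shows "2^\<gamma> dvd a^k + b^k" "\<not> 2^(\<gamma>+1) dvd a^k + b^k"
proof -
  define Q where "Q = (\<Sum>i<k. (-b)^(k - Suc i) * a^i)"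
  have X: "a^k + b^k = (a+b)*Q" unfolding Q_def using assms(4) by (rule sum_factor)
  have oQ: "odd Q" unfolding Q_def using assms(1,2,4) by (rule Q_odd)
  have g1: "2^\<gamma> dvd a+b" and g2: "\<not> 2^(\<gamma>+1) dvd a+b"
    using assms(3) unfolding exact_pow2_dvd_def by auto
  show "2^\<gamma> dvd a^k + b^k" unfolding X using g1 by simp
  show "\<not> 2^(\<gamma>+1) dvd a^k + b^k"
  proof
    assume "2^(\<gamma>+1) dvd a^k + b^k"
    then have "(2::int)^(\<gamma>+1) dvd (a+b)*Q" unfolding X .
    moreover have "coprime ((2::int)^(\<gamma>+1)) Q" using oQ by simp
    ultimately have "2^(\<gamma>+1) dvd a+b" using coprime_dvd_mult_left_iff by blast
    with g2 show False by simp
  qed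
qed

lemma sq_mod4:
  fixes x :: int assumes "odd x" shows "\<exists>y. x^2 = 4*y+1"
proof -
  obtain z where "x = 2*z+1" using assms oddE by blast
  then have "x^2 = 4*(z^2+z)+1" by (simp add: power2_eq_square algebra_simps)
  then show ?thesis by blast
qed

lemma even_not4:
  fixes a b :: int
  assumes "odd a" "odd b" "even k"
  shows "\<not> 4 dvd a^k + b^k"
proof -
  obtain j where kj: "k = 2*j" using assms(3) by blast
  have "a^k = (a^j)^2" "b^k = (b^j)^2" unfolding kj by (simp_all add: power_mult[symmetric] mult.commute)
  moreover obtain y1 where "(a^j)^2 = 4*y1+1" using sq_mod4[of "a^j"] assms(1) by auto
  moreover obtain y2 where "(b^j)^2 = 4*y2+1" using sq_mod4[of "b^j"] assms(2) by auto
  ultimately have "a^k + b^k = 4*(y1+y2) + 2" by simp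
  then show ?thesis by presburger
qed

lemma odd_sum_even: "odd (a::int) \<Longrightarrow> odd b \<Longrightarrow> 2 dvd a^k + b^k"
  by simp

lemma int_cast: "int (2^\<beta> * d) = 2^\<beta> * int d" by simp

lemma part_OG0:
  fixes a b :: int assumes "odd a" "odd b"
  shows "OG a b 0 = OG a b 1 \<union> {2 * d | d. d \<in> OG a b 1}"
proof (intro equalityI subsetI)
  fix d assume "d \<in> OG a b 0"
  then obtain k where d: "d > 0" "odd k" "k \<ge> 1" "int d dvd a^k + b^k" unfolding OG_def by auto
  show "d \<in> OG a b 1 \<union> {2 * d | d. d \<in> OG a b 1}"
  proof (cases "odd d")
    case True
    have "2 dvd a^k + b^k" using assms by simp
    moreover have "coprime (2::int) (int d)" using True by simp
    ultimately have "2 * int d dvd a^k + b^k" using d(4) divides_mult by blast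
    then show ?thesis using d unfolding OG_def by auto
  next
    case False
    then obtain e where e: "d = 2*e" by blast
    then have "e \<in> OG a b 1" using d unfolding OG_def by auto
    then show ?thesis using e by blast
  qed
next
  fix d assume "d \<in> OG a b 1 \<union> {2 * d | d. d \<in> OG a b 1}"
  then show "d \<in> OG a b 0"
  proof
    assume "d \<in> OG a b 1"
    then obtain k where d: "d > 0" "odd k" "k \<ge> 1" "2 * int d dvd a^k + b^k" unfolding OG_def by auto
    then have "int d dvd a^k + b^k" using dvd_mult_right by blast
    then show ?thesis using d unfolding OG_def by auto
  next
    assume "d \<in> {2 * d | d. d \<in> OG a b 1}"
    then obtain e k where "d = 2*e" "e > 0" "odd k" "k \<ge> 1" "2 * int e dvd a^k + b^k" unfolding OG_def by auto
    then show ?thesis unfolding OG_def by auto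
  qed
qed

lemma part_EG0:
  fixes a b :: int assumes "odd a" "odd b"
  shows "EG a b 0 = EG a b 1 \<union> {2 * d | d. d \<in> EG a b 1}"
proof (intro equalityI subsetI)
  fix d assume "d \<in> EG a b 0"
  then obtain k where d: "d > 0" "even k" "k \<ge> 2" "int d dvd a^k + b^k" unfolding EG_def by auto
  show "d \<in> EG a b 1 \<union> {2 * d | d. d \<in> EG a b 1}"
  proof (cases "odd d")
    case True
    have "2 dvd a^k + b^k" using assms by simp
    moreover have "coprime (2::int) (int d)" using True by simp
    ultimately have "2 * int d dvd a^k + b^k" using d(4) divides_mult by blast
    then show ?thesis using d unfolding EG_def by auto
  next
    case False
    then obtain e where e: "d = 2*e" by blast
    then have "e \<in> EG a b 1" using d unfolding EG_def by auto
    then show ?thesis using e by blast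
  qed
next
  fix d assume "d \<in> EG a b 1 \<union> {2 * d | d. d \<in> EG a b 1}"
  then show "d \<in> EG a b 0"
  proof
    assume "d \<in> EG a b 1"
    then obtain k where d: "d > 0" "even k" "k \<ge> 2" "2 * int d dvd a^k + b^k" unfolding EG_def by auto
    then have "int d dvd a^k + b^k" using dvd_mult_right by blast
    then show ?thesis using d unfolding EG_def by auto
  next
    assume "d \<in> {2 * d | d. d \<in> EG a b 1}"
    then obtain e k where "d = 2*e" "e > 0" "even k" "k \<ge> 2" "2 * int e dvd a^k + b^k" unfolding EG_def by auto
    then show ?thesis unfolding EG_def by auto
  qed
qed

lemma part_OG1:
  fixes a b :: int
  assumes "odd a" "odd b" "exact_pow2_dvd \<gamma> (a + b)"
  shows "OG a b 1 = {d * 2 ^ i | d i. d \<in> OG a b \<gamma> \<and> i < \<gamma>}"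
proof (intro equalityI subsetI)
  fix d assume "d \<in> OG a b 1"
  then obtain k where d: "d > 0" "odd k" "2 * int d dvd a^k + b^k" unfolding OG_def by auto
  note V = vdiv[OF assms d(2)]
  obtain i d' where dd: "d = 2^i*d'" "odd d'" using pow2_odd_decomp d(1) by blast
  have "(2::int)^(i+1) * int d' dvd a^k + b^k" using d(3) dd(1) by (simp add: ac_simps)
  then have h: "(2::int)^(i+1) dvd a^k + b^k" "int d' dvd a^k + b^k"
    using dvd_mult_left dvd_mult_right by blast+
  have "i < \<gamma>"
  proof (rule ccontr)
    assume "\<not> i < \<gamma>"
    then have "(2::int)^(\<gamma>+1) dvd 2^(i+1)" by (intro le_imp_power_dvd) simp
    with h(1) V(2) show False using dvd_trans by blast
  qed
  moreover have "coprime ((2::int)^\<gamma>) (int d')" using dd(2) by simp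
  then have "2^\<gamma> * int d' dvd a^k + b^k" using V(1) h(2) divides_mult by blast
  then have "d' \<in> OG a b \<gamma>" using dd d unfolding OG_def by (auto intro!: exI[of _ k] simp: odd_pos Suc_le_eq)
  ultimately show "d \<in> {d * 2 ^ i | d i. d \<in> OG a b \<gamma> \<and> i < \<gamma>}"
    using dd(1) by (auto simp: mult.commute)
next
  fix d assume "d \<in> {d * 2 ^ i | d i. d \<in> OG a b \<gamma> \<and> i < \<gamma>}"
  then obtain d0 i k where d: "d = d0*2^i" "i < \<gamma>" "d0 > 0" "odd k"
    "2^\<gamma> * int d0 dvd a^k + b^k" unfolding OG_def by auto
  have "(2::int)^(i+1) dvd 2^\<gamma>" using d(2) by (intro le_imp_power_dvd) simp
  then have "(2::int)^(i+1) * int d0 dvd 2^\<gamma> * int d0" by (rule mult_dvd_mono) simp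
  then have A: "(2::int)^(i+1) * int d0 dvd a^k+b^k" using d(5) by (rule dvd_trans)
  have "2 * int d = (2::int)^(i+1) * int d0" using d(1) by simp
  then have "2 * int d dvd a^k + b^k" using A by (simp only:)
  then show "d \<in> OG a b 1" using d unfolding OG_def by (auto intro!: exI[of _ k] simp: odd_pos Suc_le_eq)
qed

lemma part_OGg:
  fixes a b :: int
  assumes "coprime a b" "odd a" "odd b" "exact_pow2_dvd \<gamma> (a + b)"
  shows "OG a b \<gamma> = {d. d = 1 \<or> (odd d \<and> (\<forall>p. prime p \<and> p dvd d \<longrightarrow>
              coprime (int p) (a * b) \<and> exact_pow2_dvd 1 (ord_frac p a b)))}"
proof (intro equalityI subsetI)
  fix d assume "d \<in> OG a b \<gamma>"
  then obtain k where d: "d > 0" "odd k" "2^\<gamma> * int d dvd a^k + b^k" unfolding OG_def by auto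
  note V = vdiv[OF assms(2-4) d(2)]
  have od: "odd d"
  proof
    assume "even d"
    then obtain e where "d = 2*e" by blast
    then have "2^(\<gamma>+1) * int e dvd a^k + b^k" using d(3) by (simp add: ac_simps)
    then show False using V(2) dvd_mult_left by blast
  qed
  have "\<forall>p. prime p \<and> p dvd d \<longrightarrow> coprime (int p) (a * b) \<and> exact_pow2_dvd 1 (ord_frac p a b)"
  proof (intro allI impI)
    fix p assume p: "prime p \<and> p dvd d"
    then have "odd p" using od by (meson dvd_trans even_two_times_div_two dvd_triv_left odd_two_times_div_two_nat)
    moreover have "int p dvd a^k + b^k" using p d(3) by (meson dvd_mult_right dvd_trans int_dvd_int_iff)
    ultimately show "coprime (int p) (a * b) \<and> exact_pow2_dvd 1 (ord_frac p a b)"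
      using fwd[of p a b k 0 k] p assms(1) d(2) by simp
  qed
  then show "d \<in> {d. d = 1 \<or> (odd d \<and> (\<forall>p. prime p \<and> p dvd d \<longrightarrow>
              coprime (int p) (a * b) \<and> exact_pow2_dvd 1 (ord_frac p a b)))}" using od by blast
next
  fix d assume "d \<in> {d. d = 1 \<or> (odd d \<and> (\<forall>p. prime p \<and> p dvd d \<longrightarrow>
              coprime (int p) (a * b) \<and> exact_pow2_dvd 1 (ord_frac p a b)))}"
  then have "d = 1 \<or> (odd d \<and> (\<forall>p. prime p \<and> p dvd d \<longrightarrow>
              coprime (int p) (a * b) \<and> exact_pow2_dvd (0+1) (ord_frac p a b)))" by simp
  then show "d \<in> OG a b \<gamma>"
  proof
    assume "d = 1"
    then show ?thesis using vdiv(1)[OF assms(2-4), of 1] unfolding OG_def by (auto intro!: exI[of _ 1])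
  next
    assume h: "odd d \<and> (\<forall>p. prime p \<and> p dvd d \<longrightarrow>
              coprime (int p) (a * b) \<and> exact_pow2_dvd (0+1) (ord_frac p a b))"
    then obtain u where u: "odd u" "int d dvd a^(2^0*u) + b^(2^0*u)" using rev[where d=d and t=0 and a=a and b=b] by blast
    have "2^\<gamma> dvd a^u + b^u" using vdiv(1)[OF assms(2-4) u(1)] .
    moreover have "coprime ((2::int)^\<gamma>) (int d)" using h by simp
    moreover have u2: "int d dvd a^u + b^u" using u(2) by simp
    ultimately have "2^\<gamma> * int d dvd a^u + b^u" using divides_mult by blast
    moreover have "d > 0" using h odd_pos by blast
    ultimately show ?thesis using u(1) odd_pos unfolding OG_def by fastforce
  qed
qed

lemma part_EG1:
  fixes a b :: int
  assumes "coprime a b" "odd a" "odd b"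
  shows "EG a b 1 = {d. d = 1 \<or> (odd d \<and> (\<exists>s\<ge>2. \<forall>p. prime p \<and> p dvd d \<longrightarrow>
              coprime (int p) (a * b) \<and> exact_pow2_dvd s (ord_frac p a b)))}"
proof (intro equalityI subsetI)
  fix d assume "d \<in> EG a b 1"
  then obtain k where d: "d > 0" "even k" "k \<ge> 2" "2 * int d dvd a^k + b^k" unfolding EG_def by auto
  have od: "odd d"
  proof
    assume "even d"
    then obtain e where "d = 2*e" by blast
    then have "4 * int e dvd a^k + b^k" using d(4) by (simp add: ac_simps)
    then show False using even_not4[OF assms(2,3) d(2)] dvd_mult_left by blast
  qed
  obtain t u where tu: "k = 2^t*u" "odd u" using pow2_odd_decomp d(3) by (metis less_le_trans zero_less_numeral)
  have "t \<noteq> 0" using tu d(2) by auto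
  have "\<forall>p. prime p \<and> p dvd d \<longrightarrow> coprime (int p) (a * b) \<and> exact_pow2_dvd (t+1) (ord_frac p a b)"
  proof (intro allI impI)
    fix p assume p: "prime p \<and> p dvd d"
    have "odd p"
    proof
      assume "even p"
      then have "even d" using p by (meson dvd_trans)
      with od show False by simp
    qed
    moreover have "int p dvd a^k + b^k"
    proof -
      have "int p dvd int d" using p by simp
      also have "int d dvd 2 * int d" by simp
      also note d(4)
      finally show ?thesis .
    qed
    ultimately show "coprime (int p) (a * b) \<and> exact_pow2_dvd (t+1) (ord_frac p a b)"
      using fwd[of p a b k t u] p assms(1) tu by simp
  qed
  moreover have "t + 1 \<ge> 2" using \<open>t \<noteq> 0\<close> by simp
  ultimately show "d \<in> {d. d = 1 \<or> (odd d \<and> (\<exists>s\<ge>2. \<forall>p. prime p \<and> p dvd d \<longrightarrow>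
              coprime (int p) (a * b) \<and> exact_pow2_dvd s (ord_frac p a b)))}" using od by blast
next
  fix d assume "d \<in> {d. d = 1 \<or> (odd d \<and> (\<exists>s\<ge>2. \<forall>p. prime p \<and> p dvd d \<longrightarrow>
              coprime (int p) (a * b) \<and> exact_pow2_dvd s (ord_frac p a b)))}"
  then have "d = 1 \<or> (odd d \<and> (\<exists>s\<ge>2. \<forall>p. prime p \<and> p dvd d \<longrightarrow>
              coprime (int p) (a * b) \<and> exact_pow2_dvd s (ord_frac p a b)))" by simp
  then show "d \<in> EG a b 1"
  proof
    assume "d = 1"
    then show ?thesis using assms unfolding EG_def by (intro CollectI conjI exI[of _ 2]) auto
  next
    assume h: "odd d \<and> (\<exists>s\<ge>2. \<forall>p. prime p \<and> p dvd d \<longrightarrow>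
              coprime (int p) (a * b) \<and> exact_pow2_dvd s (ord_frac p a b))"
    then obtain s where s: "s \<ge> 2" "\<forall>p. prime p \<and> p dvd d \<longrightarrow>
              coprime (int p) (a * b) \<and> exact_pow2_dvd ((s-1)+1) (ord_frac p a b)" by auto
    obtain u where u: "odd u" "int d dvd a^(2^(s-1)*u) + b^(2^(s-1)*u)" using rev[where d=d and t="s-1" and a=a and b=b] h s by blast
    define K where "K = 2^(s-1)*u"
    have "even K" unfolding K_def using s(1) by simp
    moreover have "K \<ge> 2"
    proof -
      have "(2::nat)^1 \<le> 2^(s-1)" using s(1) by (intro power_increasing) auto
      moreover have "u \<ge> 1" using u(1) odd_pos by (simp add: Suc_le_eq)
      ultimately have "2^1 * 1 \<le> 2^(s-1)*u" by (rule mult_le_mono)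
      then show ?thesis unfolding K_def by simp
    qed
    moreover have "2 dvd a^K + b^K" using assms by simp
    moreover have "coprime (2::int) (int d)" using h by simp
    ultimately have "2 * int d dvd a^K + b^K" using u(2) divides_mult unfolding K_def by blast
    moreover have "d > 0" using h odd_pos by blast
    ultimately show ?thesis using \<open>even K\<close> \<open>K \<ge> 2\<close> unfolding EG_def by auto
  qed
qed


theorem theorem2p21:
  fixes a b :: int and \<gamma> :: nat
  assumes "coprime a b" and "odd a" and "odd b"
    and "\<gamma> > 0" and "exact_pow2_dvd \<gamma> (a + b)"
  shows
    "(\<gamma> \<ge> 2 \<longrightarrow>
        OG a b 1 = {d * 2 ^ i | d i. d \<in> OG a b \<gamma> \<and> i < \<gamma>} \<and>
        OG a b \<gamma> = {d. d = 1 \<or> (odd d \<and> (\<forall>p. prime p \<and> p dvd d \<longrightarrow>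
              coprime (int p) (a * b) \<and> exact_pow2_dvd 1 (ord_frac p a b)))})
     \<and> EG a b 1 = {d. d = 1 \<or> (odd d \<and> (\<exists>s\<ge>2. \<forall>p. prime p \<and> p dvd d \<longrightarrow>
              coprime (int p) (a * b) \<and> exact_pow2_dvd s (ord_frac p a b)))}
     \<and> OG a b 0 = OG a b 1 \<union> {2 * d | d. d \<in> OG a b 1}
     \<and> EG a b 0 = EG a b 1 \<union> {2 * d | d. d \<in> EG a b 1}"
proof -
  note A = assms
  show ?thesis
    using part_OG1[OF A(2,3,5)] part_OGg[OF A(1,2,3,5)] part_EG1[OF A(1,2,3)]
      part_OG0[OF A(2,3)] part_EG0[OF A(2,3)] by blast
qed

end
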